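(* Let $\Phi:\mathbb{R}^N\to\mathbb{R}^M$ and $L:\mathbb{R}^P\to\mathbb{R}^N$ be linear operators, let $\|\cdot\|_A$ be a norm on $\mathbb{R}^P$ with dual norm $\|\cdot\|_A^*$, set $R(x)=\|L^*x\|_A$, and let $C_A>0$ be a constant with $\|u\|_A\ge C_A\|u\|_2$ for all $u\in\mathbb{R}^P$. Let $x_0\in\mathbb{R}^N$, assume $\|\cdot\|_A$ is decomposable at $u_0=L^*x_0$ with associated subspace $T_0$ and vector $e_0\in T_0$, and let $S_0=T_0^\perp$. Suppose there exist $\eta\in\mathbb{R}^M$ and $\alpha\in\partial\|\cdot\|_A(L^*x_0)$ with $\Phi^*\eta=L\alpha$ and $\|\alpha_{S_0}\|_A^*<1$. Let $y\in\mathbb{R}^M$, $\lambda>0$, and let $x^\star$ be a minimizer of $\min_{x\in\mathbb{R}^N}\tfrac12\|y-\Phi x\|_2^2+\lambda R(x)$. Then $$\|L_{S_0}^*(x^\star-x_0)\|_2\le\frac{D^A_\alpha(L^*x^\star,L^*x_0)}{C_A\,(1-\|\alpha_{S_0}\|_A^* )}.$$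
   Context: For a subspace $V\subset\mathbb{R}^P$, $P_V$ denotes the orthogonal projector onto $V$, and $L_V=LP_V$, $L_V^*=P_VL^*$, $\alpha_V=P_V\alpha$ for $\alpha\in\mathbb{R}^P$. A norm $\|\cdot\|_A$ on $\mathbb{R}^P$ is decomposable at $u\in\mathbb{R}^P$ if (i) there exist a subspace $T\subset\mathbb{R}^P$ and a vector $e\in T$ such that $\partial\|\cdot\|_A(u)=\{\alpha\in\mathbb{R}^P:\ \alpha_T=e,\ \|\alpha_{T^\perp}\|_A^*\le 1\}$, and (ii) for every $z\in T^\perp$, $\|z\|_A=\sup\{\langle v,z\rangle: v\in T^\perp,\ \|v\|_A^*\le 1\}$. For $\alpha\in\partial\|\cdot\|_A(u_0)$, the Bregman distance is $D^A_\alpha(u,u_0)=\|u\|_A-\|u_0\|_A-\langle\alpha,u-u_0\rangle$. *)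

theory Defs
  imports "HOL-Analysis.Analysis"
begin

definition is_norm :: "('a::real_inner \<Rightarrow> real) \<Rightarrow> bool" where
  "is_norm nA \<longleftrightarrow> (\<forall>u. nA u = 0 \<longleftrightarrow> u = 0) \<and>
     (\<forall>c u. nA (c *\<^sub>R u) = \<bar>c\<bar> * nA u) \<and>
     (\<forall>u v. nA (u + v) \<le> nA u + nA v)"

definition dual_norm :: "('a::real_inner \<Rightarrow> real) \<Rightarrow> 'a \<Rightarrow> real" where
  "dual_norm nA v = Sup {v \<bullet> z | z. nA z \<le> 1}"

definition subdiff :: "('a::real_inner \<Rightarrow> real) \<Rightarrow> 'a \<Rightarrow> 'a set" where
  "subdiff f u0 = {\<alpha>. \<forall>u. f u \<ge> f u0 + \<alpha> \<bullet> (u - u0)}"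

definition proj :: "'a::euclidean_space set \<Rightarrow> 'a \<Rightarrow> 'a" where
  "proj V x = (THE p. p \<in> V \<and> x - p \<in> orthogonal_comp V)"

definition decomposable_at ::
  "('a::euclidean_space \<Rightarrow> real) \<Rightarrow> 'a \<Rightarrow> 'a set \<Rightarrow> 'a \<Rightarrow> bool" where
  "decomposable_at nA u T e \<longleftrightarrow> subspace T \<and> e \<in> T \<and>
     subdiff nA u = {\<alpha>. proj T \<alpha> = e \<and> dual_norm nA (proj (orthogonal_comp T) \<alpha>) \<le> 1} \<and>
     (\<forall>z \<in> orthogonal_comp T.
        nA z = Sup {v \<bullet> z | v. v \<in> orthogonal_comp T \<and> dual_norm nA v \<le> 1})"

definition bregman :: "('a::real_inner \<Rightarrow> real) \<Rightarrow> 'a \<Rightarrow> 'a \<Rightarrow> 'a \<Rightarrow> real" where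
  "bregman nA \<alpha> u u0 = nA u - nA u0 - \<alpha> \<bullet> (u - u0)"

end

theory Submission
  imports Defs
begin

lemma proj_unique:
  fixes V :: "'a::euclidean_space set"
  assumes "p \<in> V" "x - p \<in> orthogonal_comp V" "subspace V"
  shows "proj V x = p"
  unfolding proj_def
proof (rule the_equality)
  show "p \<in> V \<and> x - p \<in> orthogonal_comp V" using assms by auto
next
  fix q assume q: "q \<in> V \<and> x - q \<in> orthogonal_comp V"
  have "q - p \<in> V" using q assms by (simp add: subspace_diff)
  moreover have "q - p = (x - p) - (x - q)" by simp
  hence "q - p \<in> orthogonal_comp V"
    using q assms subspace_orthogonal_comp[of V] by (metis subspace_diff)
  ultimately have "(q - p) \<bullet> (q - p) = 0"
    unfolding orthogonal_comp_def orthogonal_def by auto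
  thus "q = p" by simp
qed

lemma proj_props:
  fixes V :: "'a::euclidean_space set"
  assumes "subspace V"
  shows "proj V x \<in> V \<and> x - proj V x \<in> orthogonal_comp V"
proof -
  obtain y z where y: "y \<in> span V" and z: "\<And>w. w \<in> span V \<Longrightarrow> orthogonal z w"
    and xe: "x = y + z" using orthogonal_subspace_decomp_exists by blast
  have sp: "span V = V" using assms by (simp add: span_eq_iff)
  have "y \<in> V" using y sp by simp
  moreover have "x - y \<in> orthogonal_comp V" using z sp xe
    unfolding orthogonal_comp_def orthogonal_def by (auto simp: inner_commute)
  ultimately have "proj V x = y" using proj_unique assms by blast
  thus ?thesis using \<open>y \<in> V\<close> \<open>x - y \<in> orthogonal_comp V\<close> by simp
qed

lemma dual_bound:
  fixes nA :: "'a::euclidean_space \<Rightarrow> real"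
  assumes norm_A: "is_norm nA" and CA_pos: "CA > 0"
    and CA_bound: "\<forall>u. nA u \<ge> CA * norm u"
  shows "v \<bullet> z \<le> dual_norm nA v * nA z"
proof -
  let ?X = "{v \<bullet> z | z. nA z \<le> 1}"
  have bdd: "bdd_above ?X"
  proof (rule bdd_aboveI)
    fix t assume "t \<in> ?X"
    then obtain w where t: "t = v \<bullet> w" and w: "nA w \<le> 1" by auto
    have "norm w \<le> 1 / CA" using CA_bound w CA_pos
      by (smt (verit, ccfv_SIG) le_divide_eq_1_pos mult.commute pos_le_divide_eq)
    have "t \<le> norm v * norm w" using t norm_cauchy_schwarz by simp
    also have "\<dots> \<le> norm v * (1/CA)" using \<open>norm w \<le> 1 / CA\<close> by (intro mult_left_mono) auto
    finally show "t \<le> norm v * (1/CA)" .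
  qed
  show ?thesis
  proof (cases "z = 0")
    case True
    have "nA 0 = 0" using norm_A unfolding is_norm_def by auto
    thus ?thesis using True by simp
  next
    case False
    have "norm z > 0" using False by simp
    hence pos: "nA z > 0" using CA_bound CA_pos
      by (smt (verit, best) mult_pos_pos)
    have hom: "nA ((1 / nA z) *\<^sub>R z) = \<bar>1 / nA z\<bar> * nA z"
      using norm_A unfolding is_norm_def by blast
    hence "nA ((1 / nA z) *\<^sub>R z) \<le> 1" using pos by simp
    hence "v \<bullet> ((1 / nA z) *\<^sub>R z) \<in> ?X" by blast
    hence "v \<bullet> ((1 / nA z) *\<^sub>R z) \<le> dual_norm nA v"
      unfolding dual_norm_def using bdd by (rule cSup_upper)
    hence "(v \<bullet> z) / nA z \<le> dual_norm nA v" by (simp add: divide_inverse_commute)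
    thus ?thesis using pos by (simp add: pos_divide_le_eq mult.commute)
  qed
qed

theorem lemma2:
  fixes Phi :: "real^'n^'m" and L :: "real^'p^'n"
    and nA :: "real^'p \<Rightarrow> real" and CA :: real
    and x0 :: "real^'n" and T0 :: "(real^'p) set" and e0 :: "real^'p"
    and \<eta> :: "real^'m" and \<alpha> :: "real^'p"
    and y :: "real^'m" and lam :: real and xstar :: "real^'n"
  assumes norm_A: "is_norm nA"
    and CA_pos: "CA > 0"
    and CA_bound: "\<forall>u. nA u \<ge> CA * norm u"
    and decomp: "decomposable_at nA (transpose L *v x0) T0 e0"
    and alpha_sub: "\<alpha> \<in> subdiff nA (transpose L *v x0)"
    and source: "transpose Phi *v \<eta> = L *v \<alpha>"
    and strict: "dual_norm nA (proj (orthogonal_comp T0) \<alpha>) < 1"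
    and lam_pos: "lam > 0"
    and minimizer: "\<forall>x. (1/2) * (norm (y - Phi *v xstar))\<^sup>2 + lam * nA (transpose L *v xstar)
                       \<le> (1/2) * (norm (y - Phi *v x))\<^sup>2 + lam * nA (transpose L *v x)"
  shows "norm (proj (orthogonal_comp T0) (transpose L *v (xstar - x0)))
           \<le> bregman nA \<alpha> (transpose L *v xstar) (transpose L *v x0)
              / (CA * (1 - dual_norm nA (proj (orthogonal_comp T0) \<alpha>)))"
proof -
  define S where "S = orthogonal_comp T0"
  define u where "u = transpose L *v xstar"
  define u0 where "u0 = transpose L *v x0"
  define d where "d = u - u0"
  define w where "w = proj S d"
  define a where "a = dual_norm nA (proj S \<alpha>)"
  define D where "D = bregman nA \<alpha> u u0"
  have dd: "transpose L *v (xstar - x0) = d"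
    unfolding d_def u_def u0_def by (simp add: matrix_vector_mult_diff_distrib)
  have T0s: "subspace T0" and e0T: "e0 \<in> T0"
    and sd: "subdiff nA u0 = {\<alpha>. proj T0 \<alpha> = e0 \<and> dual_norm nA (proj S \<alpha>) \<le> 1}"
    and sup: "\<forall>z \<in> S. nA z = Sup {v \<bullet> z | v. v \<in> S \<and> dual_norm nA v \<le> 1}"
    using decomp unfolding decomposable_at_def S_def u0_def by auto
  have Ss: "subspace S" unfolding S_def by (rule subspace_orthogonal_comp)
  have e0S: "e0 \<in> orthogonal_comp S"
    using e0T orthogonal_comp_subset unfolding S_def by blast
  have aT: "proj T0 \<alpha> = e0" using alpha_sub sd u0_def by auto
  have pa: "proj T0 \<alpha> \<in> T0 \<and> \<alpha> - proj T0 \<alpha> \<in> S" using proj_props[OF T0s] S_def by blast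
  have aS: "proj S \<alpha> = \<alpha> - e0"
    by (rule proj_unique[OF _ _ Ss]) (use pa aT e0S in auto)
  have wprops: "w \<in> S \<and> d - w \<in> orthogonal_comp S" using proj_props[OF Ss] w_def by blast
  have a_ineq: "(\<alpha> - e0) \<bullet> w \<le> a * nA w"
    using dual_bound[OF norm_A CA_pos CA_bound] aS a_def by metis
  have main: "nA w - \<epsilon> - a * nA w \<le> D" if eps: "\<epsilon> > 0" for \<epsilon>
  proof -
    have ne: "{v \<bullet> w | v. v \<in> S \<and> dual_norm nA v \<le> 1} \<noteq> {}"
    proof -
      have "dual_norm nA 0 = 0" unfolding dual_norm_def
      proof -
        have "{(0::real^'p) \<bullet> z | z. nA z \<le> 1} = {0}"
          using norm_A unfolding is_norm_def by (auto intro!: exI[of _ 0] simp del: zero_less_one; metis order_refl zero_le_one)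
        thus "Sup {(0::real^'p) \<bullet> z | z. nA z \<le> 1} = 0" by simp
      qed
      moreover have "0 \<in> S" using Ss subspace_0 by blast
      ultimately show ?thesis by force
    qed
    have "nA w - \<epsilon> < Sup {v \<bullet> w | v. v \<in> S \<and> dual_norm nA v \<le> 1}"
      using sup wprops eps by auto
    then obtain v where vS: "v \<in> S" and vd: "dual_norm nA v \<le> 1" and vw: "nA w - \<epsilon> < v \<bullet> w"
      using less_cSupD[OF ne] by blast
    define \<beta> where "\<beta> = e0 + v"
    have pT: "proj T0 \<beta> = e0"
      by (rule proj_unique[OF e0T _ T0s]) (use vS S_def \<beta>_def in auto)
    have pS: "proj S \<beta> = v"
      by (rule proj_unique[OF vS _ Ss]) (use e0S \<beta>_def in auto)
    have "\<beta> \<in> subdiff nA u0" using sd pT pS vd by auto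
    hence sb: "nA u \<ge> nA u0 + \<beta> \<bullet> d" unfolding subdiff_def d_def by auto
    have "D = nA u - nA u0 - \<alpha> \<bullet> d" unfolding D_def bregman_def d_def by simp
    hence "D \<ge> (\<beta> - \<alpha>) \<bullet> d" using sb by (simp add: inner_diff_left)
    moreover have "\<beta> - \<alpha> = v - (\<alpha> - e0)" unfolding \<beta>_def by simp
    moreover have "v - (\<alpha> - e0) \<in> S" using vS aS proj_props[OF Ss, of \<alpha>] Ss
      by (metis subspace_diff)
    hence "(v - (\<alpha> - e0)) \<bullet> (d - w) = 0" using wprops
      unfolding orthogonal_comp_def orthogonal_def by auto
    hence "(v - (\<alpha> - e0)) \<bullet> d = (v - (\<alpha> - e0)) \<bullet> w" by (simp add: inner_diff_right)
    ultimately have "D \<ge> v \<bullet> w - (\<alpha> - e0) \<bullet> w" by (simp add: inner_diff_left)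
    thus ?thesis using vw a_ineq by linarith
  qed
  have D1: "nA w - a * nA w \<le> D"
  proof (rule field_le_epsilon)
    fix e :: real assume "e > 0" thus "nA w - a * nA w \<le> D + e" using main[of e] by linarith
  qed
  have a1: "1 - a > 0" using strict a_def S_def by simp
  have "CA * (1 - a) * norm w = (1 - a) * (CA * norm w)" by simp
  also have "\<dots> \<le> (1 - a) * nA w" using CA_bound a1 by (simp add: mult_left_mono)
  also have "\<dots> \<le> D" using D1 by (simp add: algebra_simps)
  finally have "norm w \<le> D / (CA * (1 - a))" using CA_pos a1
    by (simp add: pos_le_divide_eq mult.commute)
  thus ?thesis using dd unfolding w_def D_def a_def S_def u_def u0_def by simp
qed

end
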